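(* Let $X$ be a real Banach space ordered by a cone $K$. Suppose $A$ is a bounded, $K$-preserving, semi-nonsupporting operator with $A=T+F$, where $T,F$ are bounded linear operators with $T(K)\subseteq K$, $F(K)\subseteq K$. Then $aT+bF$ is semi-nonsupporting for all real $a,b>0$.
   Context: A cone $K\subseteq X$ is a closed convex set such that $\alpha x\in K$ whenever $x\in K,\ \alpha\ge 0$, and such that $x\in K$, $-x\in K$ imply $x=0$. The dual cone is $K^*=\{f\in X^*: f(x)\ge 0\ \forall x\in K\}$. A bounded operator $B$ with $B(K)\subseteq K$ is semi-nonsupporting if for every pair $(x,f)$ with $x\in K\setminus\{0\}$ and $f\in K^*\setminus\{0\}$ there is $n=n(x,f)\in\mathbb N$ with $f(B^n x)>0$. *)

theory Defs
  imports "HOL-Analysis.Analysis"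
begin

definition ordering_cone :: "'a::real_normed_vector set \<Rightarrow> bool" where
  "ordering_cone K \<longleftrightarrow> closed K \<and> convex K \<and> (\<forall>x\<in>K. \<forall>\<alpha>::real. \<alpha> \<ge> 0 \<longrightarrow> \<alpha> *\<^sub>R x \<in> K)
     \<and> (\<forall>x. x \<in> K \<and> -x \<in> K \<longrightarrow> x = 0)"

definition dual_cone :: "'a::real_normed_vector set \<Rightarrow> ('a \<Rightarrow> real) set" where
  "dual_cone K = {f. bounded_linear f \<and> (\<forall>x\<in>K. f x \<ge> 0)}"

definition semi_nonsupporting :: "('a::real_normed_vector \<Rightarrow> 'a) \<Rightarrow> 'a set \<Rightarrow> bool" where
  "semi_nonsupporting B K \<longleftrightarrow>
     (\<forall>x \<in> K - {0}. \<forall>f \<in> dual_cone K - {(\<lambda>_. 0)}. \<exists>n::nat. n \<ge> 1 \<and> f ((B ^^ n) x) > 0)"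

end

theory Submission
  imports Defs
begin

theorem corollary3p6:
  fixes K :: "'a::banach set" and A T F :: "'a \<Rightarrow> 'a" and a b :: real
  assumes "ordering_cone K"
    and "bounded_linear A" and "A ` K \<subseteq> K" and "semi_nonsupporting A K"
    and "A = (\<lambda>x. T x + F x)"
    and "bounded_linear T" and "bounded_linear F"
    and "T ` K \<subseteq> K" and "F ` K \<subseteq> K"
    and "a > 0" and "b > 0"
  shows "semi_nonsupporting (\<lambda>x. a *\<^sub>R T x + b *\<^sub>R F x) K"
proof -
  define B where "B = (\<lambda>x. a *\<^sub>R T x + b *\<^sub>R F x)"
  define c where "c = min a b"
  have c0: "c > 0" using assms(10,11) by (simp add: c_def)
  have sc: "\<And>x r. x \<in> K \<Longrightarrow> r \<ge> 0 \<Longrightarrow> r *\<^sub>R x \<in> K"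
    using assms(1) by (auto simp: ordering_cone_def)
  have cvx: "convex K" using assms(1) by (auto simp: ordering_cone_def)
  have add: "x + y \<in> K" if "x \<in> K" "y \<in> K" for x y
  proof -
    have "(1/2::real) *\<^sub>R x + (1/2::real) *\<^sub>R y \<in> K"
      using cvx that by (auto simp: convex_def)
    from sc[OF this, of 2] show ?thesis by (simp add: scaleR_add_right)
  qed
  interpret T: bounded_linear T by fact
  interpret F: bounded_linear F by fact
  interpret A: bounded_linear A by fact
  have BK: "B y \<in> K" if "y \<in> K" for y
  proof -
    have "T y \<in> K" "F y \<in> K" using assms(8,9) that by auto
    hence "a *\<^sub>R T y \<in> K" "b *\<^sub>R F y \<in> K" using sc assms(10,11) by auto
    thus ?thesis using add by (simp add: B_def)
  qed
  have Bl: "B (u - v) = B u - B v" "B (r *\<^sub>R u) = r *\<^sub>R B u" for u v r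
    by (auto simp: B_def T.diff F.diff T.scaleR F.scaleR algebra_simps)
  have D: "B y - c *\<^sub>R A y \<in> K" if "y \<in> K" for y
  proof -
    have "B y - c *\<^sub>R A y = (a - c) *\<^sub>R T y + (b - c) *\<^sub>R F y"
      by (simp add: B_def assms(5) algebra_simps)
    moreover have "(a - c) *\<^sub>R T y \<in> K" "(b - c) *\<^sub>R F y \<in> K"
      using sc assms(8,9) that by (auto simp: c_def)
    ultimately show ?thesis using add by simp
  qed
  have main: "\<forall>x\<in>K. (A^^n) x \<in> K \<and> (B^^n) x - c^n *\<^sub>R (A^^n) x \<in> K" for n
  proof (induction n)
    case 0
    then show ?case by (simp add: sc[of _ 0, simplified])
  next
    case (Suc n)
    show ?case
    proof
      fix x assume x: "x \<in> K"
      let ?u = "(A^^n) x" and ?w = "(B^^n) x - c^n *\<^sub>R (A^^n) x"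
      have u: "?u \<in> K" and w: "?w \<in> K" using Suc x by auto
      have "(B^^Suc n) x - c^Suc n *\<^sub>R (A^^Suc n) x
          = B ?w + c^n *\<^sub>R (B ?u - c *\<^sub>R A ?u)"
        by (simp add: Bl algebra_simps)
      moreover have "B ?w \<in> K" using BK w by simp
      moreover have "c^n *\<^sub>R (B ?u - c *\<^sub>R A ?u) \<in> K" using sc D u c0 by simp
      ultimately have "(B^^Suc n) x - c^Suc n *\<^sub>R (A^^Suc n) x \<in> K" using add by simp
      moreover have "(A^^Suc n) x \<in> K" using assms(3) u by auto
      ultimately show "(A^^Suc n) x \<in> K \<and> (B^^Suc n) x - c^Suc n *\<^sub>R (A^^Suc n) x \<in> K" by simp
    qed
  qed
  show ?thesis
    unfolding semi_nonsupporting_def B_def[symmetric]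
  proof (intro ballI)
    fix x f assume x: "x \<in> K - {0}" and f: "f \<in> dual_cone K - {\<lambda>_. 0}"
    obtain n where n: "n \<ge> 1" "f ((A^^n) x) > 0"
      using assms(4) x f unfolding semi_nonsupporting_def by blast
    have fl: "bounded_linear f" and fp: "\<And>y. y \<in> K \<Longrightarrow> f y \<ge> 0"
      using f by (auto simp: dual_cone_def)
    interpret f: bounded_linear f by fact
    have "f ((B^^n) x - c^n *\<^sub>R (A^^n) x) \<ge> 0" using main x fp by auto
    hence "f ((B^^n) x) \<ge> c^n * f ((A^^n) x)" by (simp add: f.diff f.scaleR)
    moreover have "c^n * f ((A^^n) x) > 0" using c0 n by simp
    ultimately show "\<exists>n::nat. n \<ge> 1 \<and> f ((B^^n) x) > 0" using n(1) by force
  qed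
qed

end
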